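(* Let $(\mathcal F,d)$ be a metric space, $\gamma\in(0,\infty]$, and $\Sigma=(\Sigma_M)_{M\in\mathbb N}$ a sequence of non-empty subsets of $\mathcal F$ which is $\gamma$-encodable in $(\mathcal F,d)$ (if $\gamma=\infty$: $\infty$-encodable). Then for every non-empty $\mathcal C\subset\mathcal F$, $$\min(\gamma^*(\mathcal C|\Sigma),\gamma)\le\gamma^*_e(\mathcal C).$$
   Context: Approximation speed: $\gamma^*(\mathcal C|\Sigma)=\sup\{\gamma\in\mathbb R:\sup_{f\in\mathcal C}\inf_{\Phi\in\Sigma_M}d(f,\Phi)=O(M^{-\gamma})\text{ as }M\to\infty\}\in[-\infty,\infty]$ ($\sup\emptyset=-\infty$). A finite $X\subset\mathcal C$ is an $\varepsilon$-covering of $\mathcal C$ if every point of $\mathcal C$ is within distance $\varepsilon$ of some point of $X$; $N(\mathcal C,d,\varepsilon)$ is the minimal size of an $\varepsilon$-covering ($+\infty$ if none), $H(\mathcal C,d,\varepsilon)=\log_2N(\mathcal C,d,\varepsilon)$, and the encoding speed is $\gamma^*_e(\mathcal C)=\sup\{\gamma>0:H(\mathcal C,d,\varepsilon)=O(\varepsilon^{-1/\gamma})\text{ as }\varepsilon\to0\}$ ($=0$ if the set is empty). For $\gamma,h>0$, a sequence $(\Sigma(\gamma,h)_M)_M$ is a $(\gamma,h)$-encoding of $\Sigma$ if there exist $c_1,c_2>0$ such that for every $M$, $\Sigma(\gamma,h)_M$ is a $c_1M^{-\gamma}$-covering of $\Sigma_M$ (in particular a finite subset of $\Sigma_M$) with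 $\log_2|\Sigma(\gamma,h)_M|\le c_2M^{1+h}$. $\Sigma$ is $\gamma$-encodable if it admits a $(\gamma,h)$-encoding for every $h>0$; it is $\infty$-encodable if it is $\gamma$-encodable for every $\gamma>0$. *)

theory Defs
  imports "HOL-Analysis.Analysis" "HOL-Library.Extended_Nat" "HOL-Library.Extended_Real"
begin

text \<open>The metric space (F,d) is a type of class metric_space with d = dist.
  Sequences indexed by M in N = {1,2,...} are functions nat => _, with index 0 ignored.\<close>

definition approx_speed :: "'a::metric_space set \<Rightarrow> (nat \<Rightarrow> 'a set) \<Rightarrow> ereal" where
  "approx_speed C \<Sigma> = Sup (ereal ` {g::real. \<exists>c::real. eventually (\<lambda>M.
       (\<forall>f\<in>C. infdist f (\<Sigma> M) \<le> c * real M powr (-g))) sequentially})"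

definition is_covering :: "'a::metric_space set \<Rightarrow> real \<Rightarrow> 'a set \<Rightarrow> bool" where
  "is_covering C \<epsilon> X \<longleftrightarrow> finite X \<and> X \<subseteq> C \<and> (\<forall>y\<in>C. \<exists>x\<in>X. dist y x \<le> \<epsilon>)"

definition covering_number :: "'a::metric_space set \<Rightarrow> real \<Rightarrow> enat" where
  "covering_number C \<epsilon> = Inf {enat (card X) | X. is_covering C \<epsilon> X}"

definition metric_entropy :: "'a::metric_space set \<Rightarrow> real \<Rightarrow> ereal" where
  "metric_entropy C \<epsilon> = (case covering_number C \<epsilon> of
       enat n \<Rightarrow> ereal (log 2 (real n)) | \<infinity> \<Rightarrow> \<infinity>)"

definition encoding_speed :: "'a::metric_space set \<Rightarrow> ereal" where
  "encoding_speed C = (let S = {g::real. g > 0 \<and> (\<exists>c::real. eventually (\<lambda>\<epsilon>.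
        metric_entropy C \<epsilon> \<le> ereal (c * \<epsilon> powr (-1/g))) (at_right 0))}
     in if S = {} then 0 else Sup (ereal ` S))"

definition has_encoding :: "(nat \<Rightarrow> 'a::metric_space set) \<Rightarrow> real \<Rightarrow> real \<Rightarrow> bool" where
  "has_encoding \<Sigma> \<gamma> h \<longleftrightarrow> (\<exists>E::nat \<Rightarrow> 'a set. \<exists>c1 c2::real. c1 > 0 \<and> c2 > 0 \<and>
     (\<forall>M\<ge>1. is_covering (\<Sigma> M) (c1 * real M powr (-\<gamma>)) (E M) \<and>
             log 2 (real (card (E M))) \<le> c2 * real M powr (1 + h)))"

definition gamma_encodable :: "(nat \<Rightarrow> 'a::metric_space set) \<Rightarrow> real \<Rightarrow> bool" where
  "gamma_encodable \<Sigma> \<gamma> \<longleftrightarrow> (\<forall>h>0. has_encoding \<Sigma> \<gamma> h)"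

definition encodable :: "(nat \<Rightarrow> 'a::metric_space set) \<Rightarrow> ereal \<Rightarrow> bool" where
  "encodable \<Sigma> \<gamma> \<longleftrightarrow> (if \<gamma> = \<infinity> then (\<forall>g>0. gamma_encodable \<Sigma> g)
                        else gamma_encodable \<Sigma> (real_of_ereal \<gamma>))"

end

theory Submission imports Defs begin
lemma infdist_approx:
  assumes "A \<noteq> {}" "e > 0"
  shows "\<exists>a\<in>A. dist x a < infdist x A + e"
proof -
  have "infdist x A = (INF a\<in>A. dist x a)" using assms infdist_notempty by blast
  moreover have "bdd_below ((\<lambda>a. dist x a) ` A)" by (rule bdd_belowI[of _ 0]) auto
  ultimately show ?thesis using assms
    by (metis cINF_less_iff less_add_same_cancel1)
qed

lemma internal_cover:
  fixes C :: "'a::metric_space set"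
  assumes "finite E" "C \<noteq> {}" "\<forall>f\<in>C. \<exists>e\<in>E. dist f e \<le> r" "2*r \<le> \<epsilon>"
  shows "metric_entropy C \<epsilon> \<le> ereal (log 2 (real (card E)))"
proof -
  define E' where "E' = {e\<in>E. \<exists>f\<in>C. dist f e \<le> r}"
  define p where "p = (\<lambda>e. SOME f. f\<in>C \<and> dist f e \<le> r)"
  define X where "X = p ` E'"
  have pe: "p e \<in> C \<and> dist (p e) e \<le> r" if "e \<in> E'" for e
    using that unfolding E'_def p_def by (metis (mono_tags, lifting) mem_Collect_eq someI_ex)
  have fin: "finite E'" using assms(1) unfolding E'_def by auto
  have cov: "is_covering C \<epsilon> X"
    unfolding is_covering_def
  proof (intro conjI ballI)
    show "finite X" using fin X_def by auto
    show "X \<subseteq> C" using pe X_def by auto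
    fix y assume "y \<in> C"
    then obtain e where e: "e \<in> E" "dist y e \<le> r" using assms(3) by blast
    then have "e \<in> E'" using \<open>y\<in>C\<close> E'_def by auto
    then have "dist y (p e) \<le> \<epsilon>" using pe[of e] e assms(4)
    proof -
      have "dist y (p e) \<le> dist y e + dist (p e) e" using dist_triangle3[of y "p e" e] by (simp add: dist_commute)
      then show ?thesis using pe[of e] \<open>e\<in>E'\<close> e assms(4) by linarith
    qed
    then show "\<exists>x\<in>X. dist y x \<le> \<epsilon>" using \<open>e\<in>E'\<close> X_def by auto
  qed
  have cX: "card X \<le> card E"
  proof -
    have "card X \<le> card E'" unfolding X_def using fin by (rule card_image_le)
    also have "card E' \<le> card E" using assms(1) unfolding E'_def by (intro card_mono) auto
    finally show ?thesis .
  qed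
  have cn: "covering_number C \<epsilon> \<le> enat (card X)"
    unfolding covering_number_def using cov by (intro Inf_lower) auto
  then obtain n where n: "covering_number C \<epsilon> = enat n" "n \<le> card X"
    by (metis enat_ile enat_ord_simps(1))
  have "E \<noteq> {}" using assms(2,3) by auto
  then have cE: "card E \<ge> 1" using assms(1) by (simp add: Suc_le_eq card_gt_0_iff)
  have "log 2 (real n) \<le> log 2 (real (card E))"
  proof (cases "n = 0")
    case True
    have "log 2 (0::real) = 0" by (simp add: log_def)
    moreover have "0 \<le> log 2 (real (card E))" using cE by simp
    ultimately show ?thesis using True by simp
  next
    case False then show ?thesis using n cX by simp
  qed
  then show ?thesis unfolding metric_entropy_def using n by simp
qed

lemma core:
  fixes \<Sigma> :: "nat \<Rightarrow> 'a::metric_space set" and E :: "nat \<Rightarrow> 'a set"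
  assumes g: "0<g" "g \<le> g'" "g \<le> \<gamma>0" "0 < h"
    and ev: "eventually (\<lambda>M. \<forall>f\<in>C. infdist f (\<Sigma> M) \<le> c * real M powr (-g')) sequentially"
    and ne: "\<And>M. M\<ge>1 \<Longrightarrow> \<Sigma> M \<noteq> {}"
    and c12: "c1>0" "c2>0"
    and enc: "\<forall>M\<ge>1. is_covering (\<Sigma> M) (c1 * real M powr (-\<gamma>0)) (E M) \<and>
                log 2 (real (card (E M))) \<le> c2 * real M powr (1+h)"
    and C: "C \<noteq> {}"
  shows "\<exists>c'. eventually (\<lambda>\<epsilon>. metric_entropy C \<epsilon> \<le> ereal (c' * \<epsilon> powr (-1/(g/(1+h))))) (at_right 0)"
proof -
  obtain M0 where M0: "\<And>M. M \<ge> M0 \<Longrightarrow> \<forall>f\<in>C. infdist f (\<Sigma> M) \<le> c * real M powr (-g')"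
    using ev unfolding eventually_sequentially by blast
  define K where "K = \<bar>c\<bar> + 1 + c1"
  have Kpos: "K > 0" using c12 K_def by simp
  have A: "\<exists>e\<in>E M. dist f e \<le> K * real M powr (-g)" if M: "M \<ge> max M0 1" and f: "f \<in> C" for M f
  proof -
    have M1: "real M \<ge> 1" using M by simp
    have p1: "real M powr (-g') \<le> real M powr (-g)" using M1 g by (intro powr_mono) auto
    have p2: "real M powr (-\<gamma>0) \<le> real M powr (-g)" using M1 g by (intro powr_mono) auto
    have i: "infdist f (\<Sigma> M) \<le> \<bar>c\<bar> * real M powr (-g)"
    proof -
      have "infdist f (\<Sigma> M) \<le> c * real M powr (-g')" using M0 M f by auto
      also have "\<dots> \<le> \<bar>c\<bar> * real M powr (-g')" by (simp add: mult_right_mono)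
      also have "\<dots> \<le> \<bar>c\<bar> * real M powr (-g)" using p1 by (simp add: mult_left_mono)
      finally show ?thesis .
    qed
    obtain \<phi> where \<phi>: "\<phi> \<in> \<Sigma> M" "dist f \<phi> < infdist f (\<Sigma> M) + real M powr (-g)"
      using infdist_approx[of "\<Sigma> M" "real M powr (-g)" f] ne M M1 by auto
    have cov: "is_covering (\<Sigma> M) (c1 * real M powr (-\<gamma>0)) (E M)" using enc M by auto
    then obtain e where e: "e \<in> E M" "dist \<phi> e \<le> c1 * real M powr (-\<gamma>0)"
      using \<phi>(1) unfolding is_covering_def by blast
    have "c1 * real M powr (-\<gamma>0) \<le> c1 * real M powr (-g)" using p2 c12 by simp
    then have "dist f e \<le> \<bar>c\<bar> * real M powr (-g) + real M powr (-g) + c1 * real M powr (-g)"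
      using dist_triangle[of f e \<phi>] \<phi> e i by linarith
    also have "\<dots> = K * real M powr (-g)" unfolding K_def by (simp add: algebra_simps)
    finally show ?thesis using e by blast
  qed
  have B: "metric_entropy C \<epsilon> \<le> ereal (c2 * real M powr (1+h))"
    if M: "M \<ge> max M0 1" and eps: "2 * (K * real M powr (-g)) \<le> \<epsilon>" for M \<epsilon>
  proof -
    have cov: "is_covering (\<Sigma> M) (c1 * real M powr (-\<gamma>0)) (E M)" using enc M by auto
    have "metric_entropy C \<epsilon> \<le> ereal (log 2 (real (card (E M))))"
      using internal_cover[of "E M" C "K * real M powr (-g)" \<epsilon>] cov A[OF M] C eps
      unfolding is_covering_def by blast
    also have "\<dots> \<le> ereal (c2 * real M powr (1+h))" using enc M by auto
    finally show ?thesis .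
  qed
  define N where "N = real (max M0 1)"
  have N1: "N \<ge> 1" using N_def by simp
  define \<epsilon>0 where "\<epsilon>0 = 2*K / N powr g"
  have e0: "\<epsilon>0 > 0" using Kpos N1 \<epsilon>0_def by simp
  define c' where "c' = c2 * 2 powr (1+h) * (2*K) powr ((1+h)/g)"
  have "\<forall>\<epsilon>>0. \<epsilon> < \<epsilon>0 \<longrightarrow> metric_entropy C \<epsilon> \<le> ereal (c' * \<epsilon> powr (-1/(g/(1+h))))"
  proof (intro allI impI)
    fix \<epsilon> :: real assume ep: "\<epsilon> > 0" "\<epsilon> < \<epsilon>0"
    define T where "T = (2*K/\<epsilon>) powr (1/g)"
    have "N powr g < 2*K/\<epsilon>" using ep \<epsilon>0_def N1 Kpos
      by (simp add: field_simps)
    then have "(N powr g) powr (1/g) \<le> (2*K/\<epsilon>) powr (1/g)" using g N1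
      by (intro powr_mono2) auto
    then have NT: "N \<le> T" unfolding T_def using g N1 by (simp add: powr_powr)
    have Tpos: "T > 0" using T_def Kpos ep by simp
    define M where "M = nat \<lceil>T\<rceil>"
    have MT: "real M \<ge> T" "real M < T + 1" unfolding M_def using Tpos by linarith+
    have MM: "M \<ge> max M0 1" using MT NT N_def by linarith
    have "real M powr (-g) \<le> T powr (-g)" using MT Tpos g by (intro powr_mono2') auto
    also have "T powr (-g) = \<epsilon>/(2*K)" unfolding T_def using g Kpos ep
      by (simp add: powr_powr powr_minus_divide powr_divide)
    finally have "2 * (K * real M powr (-g)) \<le> \<epsilon>" using Kpos by (simp add: field_simps)
    from B[OF MM this] have 1: "metric_entropy C \<epsilon> \<le> ereal (c2 * real M powr (1+h))" .
    have aux: "\<epsilon> powr ((1+h)/g) * \<epsilon> powr ((-1-h)/g) = 1"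
    proof -
      have "\<epsilon> powr ((1+h)/g) * \<epsilon> powr ((-1-h)/g) = \<epsilon> powr ((1+h)/g + (-1-h)/g)"
        by (simp add: powr_add)
      also have "(1+h)/g + (-1-h)/g = 0" by (simp add: add_divide_distrib[symmetric])
      finally show ?thesis using ep by simp
    qed
    have "real M \<le> 2*T" using MT NT N1 by linarith
    then have "real M powr (1+h) \<le> (2*T) powr (1+h)" using g MM by (intro powr_mono2) auto
    also have "(2*T) powr (1+h) = 2 powr (1+h) * (2*K) powr ((1+h)/g) * \<epsilon> powr (-1/(g/(1+h)))"
      unfolding T_def using g Kpos ep
      by (simp add: powr_mult powr_powr powr_divide powr_minus_divide field_simps aux)
    finally have "c2 * real M powr (1+h) \<le> c' * \<epsilon> powr (-1/(g/(1+h)))"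
      unfolding c'_def using c12 by (simp add: mult.assoc mult_left_mono)
    with 1 show "metric_entropy C \<epsilon> \<le> ereal (c' * \<epsilon> powr (-1/(g/(1+h))))"
      using order_trans ereal_less_eq(3) by blast
  qed
  note evall = this
  have "eventually (\<lambda>\<epsilon>. metric_entropy C \<epsilon> \<le> ereal (c' * \<epsilon> powr (-1/(g/(1+h))))) (at_right 0)"
    by (rule eventually_mono[OF eventually_at_right_real[OF e0]]) (use evall in auto)
  then show ?thesis by blast
qed

lemma enc_nonneg: "encoding_speed C \<ge> 0"
proof -
  define S where "S = {g::real. g > 0 \<and> (\<exists>c::real. eventually (\<lambda>\<epsilon>.
        metric_entropy C \<epsilon> \<le> ereal (c * \<epsilon> powr (-1/g))) (at_right 0))}"
  show ?thesis
  proof (cases "S = {}")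
    case True then show ?thesis unfolding encoding_speed_def S_def[symmetric] Let_def by simp
  next
    case False
    then obtain g where "g \<in> S" by auto
    then have "ereal 0 \<le> ereal g" using S_def by auto
    also have "\<dots> \<le> Sup (ereal ` S)" using \<open>g\<in>S\<close> by (simp add: Sup_upper)
    finally show ?thesis using False unfolding encoding_speed_def S_def[symmetric] Let_def
      by (simp add: zero_ereal_def)
  qed
qed

theorem mainTheorem8:
  fixes \<Sigma> :: "nat \<Rightarrow> 'a::metric_space set" and \<gamma> :: ereal and C :: "'a set"
  assumes "\<gamma> > 0"
    and "\<And>M. M \<ge> 1 \<Longrightarrow> \<Sigma> M \<noteq> {}"
    and "encodable \<Sigma> \<gamma>"
    and "C \<noteq> {}"
  shows "min (approx_speed C \<Sigma>) \<gamma> \<le> encoding_speed C"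
proof -
  define S where "S = {g::real. g > 0 \<and> (\<exists>c::real. eventually (\<lambda>\<epsilon>.
        metric_entropy C \<epsilon> \<le> ereal (c * \<epsilon> powr (-1/g))) (at_right 0))}"
  have inS: "t \<in> S" if t: "0 < t" "ereal t < min (approx_speed C \<Sigma>) \<gamma>" for t
  proof -
    obtain z where z: "ereal t < z" "z < min (approx_speed C \<Sigma>) \<gamma>" using t dense by blast
    define g where "g = real_of_ereal z"
    have zg: "z = ereal g" using z g_def by (cases z) auto
    have gt: "t < g" using z zg by simp
    have "ereal g < Sup (ereal ` {g::real. \<exists>c::real. eventually (\<lambda>M.
       (\<forall>f\<in>C. infdist f (\<Sigma> M) \<le> c * real M powr (-g))) sequentially})"
      using z zg unfolding approx_speed_def by simp
    then obtain g' where g': "g < g'" "\<exists>c::real. eventually (\<lambda>M.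
       (\<forall>f\<in>C. infdist f (\<Sigma> M) \<le> c * real M powr (-g'))) sequentially"
      by (auto simp: less_Sup_iff)
    then obtain c where c: "eventually (\<lambda>M.
       (\<forall>f\<in>C. infdist f (\<Sigma> M) \<le> c * real M powr (-g'))) sequentially" by blast
    obtain \<gamma>0 where g0: "g \<le> \<gamma>0" "gamma_encodable \<Sigma> \<gamma>0"
    proof (cases "\<gamma> = \<infinity>")
      case True
      then show ?thesis using that assms(3) gt t unfolding encodable_def by auto
    next
      case False
      then have "\<gamma> = ereal (real_of_ereal \<gamma>)" using assms(1) by (cases \<gamma>) auto
      moreover have "ereal g < \<gamma>" using z zg by simp
      ultimately have "g < real_of_ereal \<gamma>" by (metis ereal_less_eq(3) less_le)
      then show ?thesis using that assms(3) False unfolding encodable_def by (meson less_le)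
    qed
    define h where "h = g/t - 1"
    have "1 < g/t" using gt t by simp
    then have hpos: "h > 0" using h_def by simp
    have "1+h = g/t" using h_def by simp
    then have gh: "g/(1+h) = t" using t gt by simp
    obtain E c1 c2 where E: "c1 > 0" "c2 > 0" "\<forall>M\<ge>1. is_covering (\<Sigma> M) (c1 * real M powr (-\<gamma>0)) (E M) \<and>
             log 2 (real (card (E M))) \<le> c2 * real M powr (1 + h)"
      using g0(2) hpos unfolding gamma_encodable_def has_encoding_def by blast
    have "\<exists>c'. eventually (\<lambda>\<epsilon>. metric_entropy C \<epsilon> \<le> ereal (c' * \<epsilon> powr (-1/(g/(1+h))))) (at_right 0)"
      by (rule core[OF _ _ g0(1) hpos c assms(2) E assms(4)]) (use gt t g' in auto)
    then show ?thesis unfolding S_def using gh t by auto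
  qed
  show ?thesis
  proof (rule dense_le)
    fix y assume y: "y < min (approx_speed C \<Sigma>) \<gamma>"
    show "y \<le> encoding_speed C"
    proof (cases "y \<le> 0")
      case True then show ?thesis using enc_nonneg order_trans by blast
    next
      case False
      then obtain t where yt: "y = ereal t" using y by (cases y) auto
      then have "t > 0" using False by simp
      then have "t \<in> S" using inS y yt by auto
      then have "y \<le> Sup (ereal ` S)" using yt by (simp add: Sup_upper)
      then show ?thesis using \<open>t\<in>S\<close> unfolding encoding_speed_def S_def[symmetric] Let_def by auto
    qed
  qed
qed
end
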